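(* Let $p$ be a prime, $t\ge1$, and let $(K_n,\alpha)$ be an edge-labeled complete graph over $\mathbb{Z}/p^t\mathbb{Z}$ whose edges carry labels $p^{i_1},\dots,p^{i_{r_n}}$ (in no particular order), with $1\le i_s<t$ for all $s$. For $1<i\le n$ let $p^{a_i}=\big[\bigcup_{k=1}^{i-1}\{(p^{(i,k)})\}\big]$. Then for each $i>1$ the vector $F^{(i)}=(f^{(i)}_{v_1},\dots,f^{(i)}_{v_n})$ defined by $f^{(i)}_v=p^{a_i}$ if $v\in V^{(i,a_i+1)}$ and $f^{(i)}_v=0$ otherwise is an $i$-th flow-up class (with $f^{(i)}_{v_i}=p^{a_i}$). Moreover, $\operatorname{rk}[\mathbb{Z}/p^t\mathbb{Z}]_{(K_n,\alpha)}=n$.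
   Context: A spline on an edge-labeled graph $(G,\alpha)$ over $\mathbb{Z}/m\mathbb{Z}$ (edges labeled by nonzero ideals) is a vector $(f_{v_1},\dots,f_{v_n})\in(\mathbb{Z}/m\mathbb{Z})^n$ with $f_{v_i}-f_{v_j}\in\alpha(v_iv_j)$ for every edge; the splines form a $\mathbb{Z}$-module $[\mathbb{Z}/m\mathbb{Z}]_{(G,\alpha)}$ whose rank $\operatorname{rk}$ is the smallest size of a generating set. An $i$-th flow-up class is a spline with $f_{v_i}\ne0$ and $f_{v_t}=0$ for $t<i$. $K_n$ is the complete graph on $v_1,\dots,v_n$, $r_n=n(n-1)/2$; an edge labeled $p^c$ means its ideal is generated by $p^c+p^t\mathbb{Z}$. A trail is a sequence of vertices and edges in which no edge is repeated; a $v_k$-trail of $v_i$ is a trail from $v_i$ to $v_k$; $(p^{(i,k)})$ is the gcd (in $\mathbb{Z}$) of the integer labels on such a trail, $\{(p^{(i,k)})\}$ the set of these over all $v_k$-trails of $v_i$, and $[\,S\,]$ the lcm of a finite set $S$. For $1\le j\le n$ and a positive integer $b$, $V^{(j,b)}$ is the vertex set of $H^{(j,b)}$, the largest connected subgraph of $K_n$ containing $v_j$, having $v_j$ as its smallest-index vertex, all of whose edges carry labels $p^{c}$ with $b\le c<t$; i.e. the connected component of $v_j$ in the graph on $\{v_j,\dots,v_n\}$ whose edges are those edges of $K_n$ among these vertices labeled $p^c$ with $c\ge b$. *)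

theory Defs
  imports Main "HOL-Number_Theory.Number_Theory"
begin

text \<open>Vertices of K_n are the naturals 1..n (v_i is i).  An edge labeling with labels
  p^c is given by an exponent function c (c u w is the exponent of the label of edge u w).\<close>

definition valid_labeling :: "nat \<Rightarrow> nat \<Rightarrow> (nat \<Rightarrow> nat \<Rightarrow> nat) \<Rightarrow> bool" where
  "valid_labeling n t c \<longleftrightarrow>
     (\<forall>u\<in>{1..n}. \<forall>w\<in>{1..n}. u \<noteq> w \<longrightarrow> c u w = c w u \<and> 1 \<le> c u w \<and> c u w < t)"

text \<open>Elements of Z/mZ are represented by their canonical representatives in {0..<m};
  a vector in (Z/mZ)^n is a function on {1..n}, zero outside.\<close>

definition zmod_vec :: "int \<Rightarrow> nat \<Rightarrow> (nat \<Rightarrow> int) \<Rightarrow> bool" where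
  "zmod_vec m n f \<longleftrightarrow> (\<forall>v. v \<notin> {1..n} \<longrightarrow> f v = 0) \<and> (\<forall>v\<in>{1..n}. 0 \<le> f v \<and> f v < m)"

definition in_ideal_mod :: "int \<Rightarrow> int \<Rightarrow> int \<Rightarrow> bool" where
  "in_ideal_mod m g x \<longleftrightarrow> (\<exists>r::int. [x = r * g] (mod m))"

definition is_spline :: "nat \<Rightarrow> nat \<Rightarrow> nat \<Rightarrow> (nat \<Rightarrow> nat \<Rightarrow> nat) \<Rightarrow> (nat \<Rightarrow> int) \<Rightarrow> bool" where
  "is_spline p t n c f \<longleftrightarrow> zmod_vec (int p ^ t) n f \<and>
     (\<forall>u\<in>{1..n}. \<forall>w\<in>{1..n}. u \<noteq> w \<longrightarrow> in_ideal_mod (int p ^ t) (int p ^ c u w) (f u - f w))"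

definition splines :: "nat \<Rightarrow> nat \<Rightarrow> nat \<Rightarrow> (nat \<Rightarrow> nat \<Rightarrow> nat) \<Rightarrow> (nat \<Rightarrow> int) set" where
  "splines p t n c = {f. is_spline p t n c f}"

definition generates_splines :: "nat \<Rightarrow> nat \<Rightarrow> nat \<Rightarrow> (nat \<Rightarrow> nat \<Rightarrow> nat) \<Rightarrow> nat \<Rightarrow> (nat \<Rightarrow> nat \<Rightarrow> int) \<Rightarrow> bool" where
  "generates_splines p t n c k g \<longleftrightarrow>
     (\<forall>j<k. g j \<in> splines p t n c) \<and>
     (\<forall>f\<in>splines p t n c. \<exists>a::nat \<Rightarrow> int. \<forall>v\<in>{1..n}.
        [f v = (\<Sum>j<k. a j * g j v)] (mod (int p ^ t)))"

definition spline_rank :: "nat \<Rightarrow> nat \<Rightarrow> nat \<Rightarrow> (nat \<Rightarrow> nat \<Rightarrow> nat) \<Rightarrow> nat" where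
  "spline_rank p t n c = (LEAST k. \<exists>g. generates_splines p t n c k g)"

definition is_flow_up :: "nat \<Rightarrow> nat \<Rightarrow> nat \<Rightarrow> (nat \<Rightarrow> nat \<Rightarrow> nat) \<Rightarrow> nat \<Rightarrow> (nat \<Rightarrow> int) \<Rightarrow> bool" where
  "is_flow_up p t n c i f \<longleftrightarrow> is_spline p t n c f \<and>
     \<not> [f i = 0] (mod (int p ^ t)) \<and> (\<forall>s. 1 \<le> s \<and> s < i \<longrightarrow> [f s = 0] (mod (int p ^ t)))"

text \<open>Trails in K_n: vertex lists, consecutive vertices distinct (hence adjacent in K_n),
  no (undirected) edge repeated.\<close>
definition trail_edges :: "nat list \<Rightarrow> (nat \<times> nat) list" where
  "trail_edges xs = zip xs (tl xs)"

definition is_trail :: "nat \<Rightarrow> nat list \<Rightarrow> bool" where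
  "is_trail n xs \<longleftrightarrow> xs \<noteq> [] \<and> set xs \<subseteq> {1..n} \<and>
     (\<forall>(x,y)\<in>set (trail_edges xs). x \<noteq> y) \<and>
     distinct (map (\<lambda>(x,y). {x,y}) (trail_edges xs))"

definition trails_from_to :: "nat \<Rightarrow> nat \<Rightarrow> nat \<Rightarrow> nat list set" where
  "trails_from_to n i k = {xs. is_trail n xs \<and> hd xs = i \<and> last xs = k}"

definition trail_gcd :: "nat \<Rightarrow> (nat \<Rightarrow> nat \<Rightarrow> nat) \<Rightarrow> nat list \<Rightarrow> int" where
  "trail_gcd p c xs = Gcd ((\<lambda>(x,y). int p ^ c x y) ` set (trail_edges xs))"

definition lcm_trail_gcds :: "nat \<Rightarrow> nat \<Rightarrow> (nat \<Rightarrow> nat \<Rightarrow> nat) \<Rightarrow> nat \<Rightarrow> int" where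
  "lcm_trail_gcds p n c i = Lcm (\<Union>k\<in>{1..i-1}. trail_gcd p c ` trails_from_to n i k)"

definition a_exp :: "nat \<Rightarrow> nat \<Rightarrow> (nat \<Rightarrow> nat \<Rightarrow> nat) \<Rightarrow> nat \<Rightarrow> nat" where
  "a_exp p n c i = multiplicity (int p) (lcm_trail_gcds p n c i)"

text \<open>V^(j,b): component of v_j in the graph on v_j..v_n with edges labeled p^c, c \<ge> b.\<close>
definition V_set :: "nat \<Rightarrow> (nat \<Rightarrow> nat \<Rightarrow> nat) \<Rightarrow> nat \<Rightarrow> nat \<Rightarrow> nat set" where
  "V_set n c j b = {v. (\<lambda>u w. j \<le> u \<and> u \<le> n \<and> j \<le> w \<and> w \<le> n \<and> u \<noteq> w \<and> b \<le> c u w)\<^sup>*\<^sup>* j v}"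

definition F_vec :: "nat \<Rightarrow> nat \<Rightarrow> (nat \<Rightarrow> nat \<Rightarrow> nat) \<Rightarrow> nat \<Rightarrow> nat \<Rightarrow> int" where
  "F_vec p n c i v = (if v \<in> V_set n c i (a_exp p n c i + 1) then int p ^ a_exp p n c i else 0)"

end

theory Submission
  imports Defs "Jordan_Normal_Form.Determinant"
begin

lemma te_Cons2[simp]: "trail_edges (x#y#xs) = (x,y) # trail_edges (y#xs)"
  by (simp add: trail_edges_def)
lemma te_single[simp]: "trail_edges [x] = []"
  by (simp add: trail_edges_def)
lemma te_Nil[simp]: "trail_edges [] = []"
  by (simp add: trail_edges_def)

lemma te_snoc: "xs \<noteq> [] \<Longrightarrow> trail_edges (xs@[w]) = trail_edges xs @ [(last xs, w)]"
proof (induction xs)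
  case Nil then show ?case by simp
next
  case (Cons x xs) then show ?case by (cases xs) auto
qed

lemma te_mem: "(x,y) \<in> set (trail_edges xs) \<Longrightarrow> x \<in> set xs \<and> y \<in> set xs"
proof (induction xs rule: induct_list012)
  case (3 x y zs) then show ?case by auto
qed auto

lemma te_append: "set (trail_edges zs) \<subseteq> set (trail_edges (us @ zs))"
proof (induction us)
  case (Cons u us) then show ?case by (cases "us @ zs") auto
qed simp

lemma distinct_trail: "distinct xs \<Longrightarrow> xs \<noteq> [] \<Longrightarrow> set xs \<subseteq> {1..n} \<Longrightarrow> is_trail n xs"
proof (induction xs rule: induct_list012)
  case (2 x) then show ?case by (simp add: is_trail_def)
next
  case (3 x y zs)
  then have IH: "is_trail n (y#zs)" by simp
  have "{x,y} \<notin> (\<lambda>(x,y). {x,y}) ` set (trail_edges (y#zs))"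
  proof
    assume "{x,y} \<in> (\<lambda>(x,y). {x,y}) ` set (trail_edges (y#zs))"
    then obtain u v where "(u,v) \<in> set (trail_edges (y#zs))" "{x,y} = {u,v}" by auto
    then show False using te_mem[of u v "y#zs"] 3(3) by (auto simp: doubleton_eq_iff)
  qed
  then show ?case using IH 3(3,5) by (auto simp: is_trail_def)
qed simp

lemma rtranclp_path: "R\<^sup>*\<^sup>* x z \<Longrightarrow> \<exists>ys. ys \<noteq> [] \<and> distinct ys \<and> hd ys = x \<and> last ys = z \<and>
   (\<forall>(u,v)\<in>set (trail_edges ys). R u v)"
proof (induction rule: converse_rtranclp_induct)
  case base
  then show ?case by (intro exI[of _ "[z]"]) auto
next
  case (step x y)
  then obtain ys where ys: "ys \<noteq> []" "distinct ys" "hd ys = y" "last ys = z"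
     "\<forall>(u,v)\<in>set (trail_edges ys). R u v" by blast
  show ?case
  proof (cases "x \<in> set ys")
    case True
    then obtain us vs where uv: "ys = us @ x # vs" by (meson split_list)
    show ?thesis
      apply (intro exI[of _ "x#vs"])
      using ys uv te_append[of "x#vs" us] by auto
  next
    case False
    obtain y' ys' where "ys = y' # ys'" using ys(1) by (cases ys) auto
    then show ?thesis
      apply (intro exI[of _ "x#ys"])
      using ys False step(1) by auto
  qed
qed


lemma sum_upd: "j0 < (N::nat) \<Longrightarrow> (\<Sum>j<N. (b(j0 := b j0 + r)) j * g j) = (\<Sum>j<N. b j * g j) + r * (g j0 :: int)"
proof -
  assume j0: "j0 < N"
  have "(\<Sum>j<N. (b(j0 := b j0 + r)) j * g j) = (\<Sum>j<N. b j * g j + (if j = j0 then r * g j0 else 0))"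
    by (intro sum.cong) (auto simp: distrib_right)
  also have "\<dots> = (\<Sum>j<N. b j * g j) + r * g j0" 
  proof -
    have "(\<Sum>j<N. if j = j0 then r * g j0 else 0) = r * g j0"
      using j0 by (simp add: sum.If_cases)
    then show ?thesis by (simp add: sum.distrib)
  qed
  finally show ?thesis .
qed

locale kn =
  fixes p t n :: nat and c :: "nat \<Rightarrow> nat \<Rightarrow> nat"
  assumes pr: "prime p" and t1: "t \<ge> 1" and vl: "valid_labeling n t c"
begin

lemma p_gt1: "p > 1" using pr prime_gt_1_nat by blast

lemma pt_gt1: "int p ^ t > 1"
  using p_gt1 t1 by (intro one_less_power) auto

lemma edge_props: "u \<in> {1..n} \<Longrightarrow> w \<in> {1..n} \<Longrightarrow> u \<noteq> w \<Longrightarrow> c u w = c w u \<and> 1 \<le> c u w \<and> c u w < t"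
  using vl unfolding valid_labeling_def by blast

lemma trail_edge_props: "is_trail n xs \<Longrightarrow> (x,y)\<in>set (trail_edges xs) \<Longrightarrow>
   x\<in>{1..n} \<and> y\<in>{1..n} \<and> x\<noteq>y \<and> 1 \<le> c x y \<and> c x y < t"
proof -
  assume a: "is_trail n xs" "(x,y)\<in>set (trail_edges xs)"
  have m: "x \<in> set xs" "y \<in> set xs" using te_mem[OF a(2)] by auto
  have s: "set xs \<subseteq> {1..n}" "x \<noteq> y" using a unfolding is_trail_def by auto
  have "x \<in> {1..n}" "y \<in> {1..n}" using m s by auto
  then show ?thesis using s(2) edge_props[of x y] by blast
qed

definition me :: "nat list \<Rightarrow> nat" where
  "me xs = Min ((\<lambda>(x,y). c x y) ` set (trail_edges xs))"

lemma trail_ne_edges: "xs \<in> trails_from_to n i k \<Longrightarrow> i \<noteq> k \<Longrightarrow> trail_edges xs \<noteq> []"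
proof -
  assume a: "xs \<in> trails_from_to n i k" "i \<noteq> k"
  then obtain x ys where xs: "xs = x # ys" unfolding trails_from_to_def is_trail_def
    by (cases xs) auto
  show ?thesis
  proof (cases ys)
    case Nil then show ?thesis using a xs unfolding trails_from_to_def by auto
  next
    case (Cons y zs) then show ?thesis using xs by auto
  qed
qed

lemma me_in: "trail_edges xs \<noteq> [] \<Longrightarrow> me xs \<in> (\<lambda>(x,y). c x y) ` set (trail_edges xs)"
  unfolding me_def by (intro Min_in) auto

lemma me_le: "(x,y) \<in> set (trail_edges xs) \<Longrightarrow> me xs \<le> c x y"
  unfolding me_def by (intro Min_le) force+

lemma me_ge: "trail_edges xs \<noteq> [] \<Longrightarrow> (\<forall>(x,y)\<in>set (trail_edges xs). m \<le> c x y) \<Longrightarrow> m \<le> me xs"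
  unfolding me_def by (subst Min_ge_iff) auto

lemma tg: "trail_edges xs \<noteq> [] \<Longrightarrow> trail_gcd p c xs = int p ^ me xs"
proof -
  assume ne: "trail_edges xs \<noteq> []"
  let ?S = "(\<lambda>(x,y). int p ^ c x y) ` set (trail_edges xs)"
  obtain x y where xy: "(x,y) \<in> set (trail_edges xs)" "me xs = c x y" using me_in[OF ne] by auto
  have "int p ^ me xs \<in> ?S" using xy by force
  then have d1: "Gcd ?S dvd int p ^ me xs" by (rule Gcd_dvd)
  have "\<forall>s\<in>?S. int p ^ me xs dvd s"
    using me_le by (auto intro: le_imp_power_dvd)
  then have d2: "int p ^ me xs dvd Gcd ?S" by (intro Gcd_greatest) auto
  show ?thesis unfolding trail_gcd_def
    using d1 d2 by (intro zdvd_antisym_nonneg) auto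
qed

definition Xs :: "nat \<Rightarrow> nat set" where
  "Xs i = {me xs | xs. \<exists>k\<in>{1..i-1}. xs \<in> trails_from_to n i k}"

definition A :: "nat \<Rightarrow> nat" where "A i = Max (Xs i)"

lemma me_range: "xs \<in> trails_from_to n i k \<Longrightarrow> i \<noteq> k \<Longrightarrow> 1 \<le> me xs \<and> me xs < t"
proof -
  assume a: "xs \<in> trails_from_to n i k" "i \<noteq> k"
  then have ne: "trail_edges xs \<noteq> []" by (rule trail_ne_edges)
  obtain x y where xy: "(x,y) \<in> set (trail_edges xs)" "me xs = c x y" using me_in[OF ne] by auto
  then show ?thesis using trail_edge_props[of xs x y] a(1) unfolding trails_from_to_def by auto
qed

lemma Xs_props: assumes i: "i \<in> {2..n}"
  shows "finite (Xs i)" "Xs i \<noteq> {}" "Xs i \<subseteq> {1..<t}"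
proof -
  show s: "Xs i \<subseteq> {1..<t}" unfolding Xs_def using me_range by fastforce
  then show "finite (Xs i)" using finite_subset by blast
  have "is_trail n [i,1]" using i by (intro distinct_trail) auto
  then have "[i,1] \<in> trails_from_to n i 1" unfolding trails_from_to_def by auto
  then show "Xs i \<noteq> {}" unfolding Xs_def using i by fastforce
qed

lemma A_props: assumes i: "i \<in> {2..n}"
  shows "1 \<le> A i" "A i < t"
    "\<And>k xs. k \<in> {1..i-1} \<Longrightarrow> xs \<in> trails_from_to n i k \<Longrightarrow> me xs \<le> A i"
    "\<exists>k\<in>{1..i-1}. \<exists>xs\<in>trails_from_to n i k. me xs = A i"
proof -
  have m: "A i \<in> Xs i" unfolding A_def using Xs_props[OF i] by (intro Max_in) auto
  then show "1 \<le> A i" "A i < t"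
    using Xs_props(3)[OF i] by auto
  show "\<exists>k\<in>{1..i-1}. \<exists>xs\<in>trails_from_to n i k. me xs = A i"
  proof -
    obtain xs k where "k\<in>{1..i-1}" "xs \<in> trails_from_to n i k" "A i = me xs"
      using m unfolding Xs_def by blast
    then show ?thesis by metis
  qed
  show "\<And>k xs. k \<in> {1..i-1} \<Longrightarrow> xs \<in> trails_from_to n i k \<Longrightarrow> me xs \<le> A i"
    unfolding A_def using Xs_props[OF i] by (intro Max_ge) (auto simp: Xs_def)
qed

lemma lcm_eq: assumes i: "i \<in> {2..n}" shows "lcm_trail_gcds p n c i = int p ^ A i"
proof -
  let ?S = "\<Union>k\<in>{1..i-1}. trail_gcd p c ` trails_from_to n i k"
  have S: "?S = (\<lambda>e. int p ^ e) ` Xs i"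
  proof -
    have "trail_gcd p c xs = int p ^ me xs" if "k\<in>{1..i-1}" "xs \<in> trails_from_to n i k" for k xs
      using that by (intro tg trail_ne_edges[of xs i k]) auto
    then show ?thesis unfolding Xs_def by fastforce
  qed
  obtain k xs where kx: "k\<in>{1..i-1}" "xs\<in>trails_from_to n i k" "me xs = A i" using A_props(4)[OF i] by blast
  have "A i \<in> Xs i" unfolding Xs_def using kx by (intro CollectI exI[of _ xs] conjI) auto
  then have "int p ^ A i \<in> ?S" unfolding S by (rule imageI)
  then have d1: "int p ^ A i dvd Lcm ?S" by (rule dvd_Lcm)
  have "\<forall>s\<in>?S. s dvd int p ^ A i" unfolding S Xs_def
    using A_props(3)[OF i] by (auto intro: le_imp_power_dvd)
  then have d2: "Lcm ?S dvd int p ^ A i" by (intro Lcm_least) auto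
  show ?thesis unfolding lcm_trail_gcds_def
    using d1 d2 by (intro zdvd_antisym_nonneg) auto
qed

lemma a_exp_eq: assumes i: "i \<in> {2..n}" shows "a_exp p n c i = A i"
proof -
  have "prime_elem (int p)" using pr by (simp add: prime_imp_prime_elem)
  then show ?thesis unfolding a_exp_def lcm_eq[OF i] by simp
qed


lemma V_mem: assumes "v \<in> V_set n c j b" shows "v = j \<or> (j \<le> v \<and> v \<le> n)"
  using assms unfolding V_set_def mem_Collect_eq
  by (induction rule: rtranclp_induct) auto

lemma V_refl: "j \<in> V_set n c j b" unfolding V_set_def by simp

lemma vert_edge: "ys \<noteq> [] \<Longrightarrow> x \<in> set ys \<Longrightarrow> x = hd ys \<or> (\<exists>u. (u,x) \<in> set (trail_edges ys))"
proof (induction ys rule: induct_list012)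
  case (3 a b zs)
  then show ?case by (cases "x = a") auto
qed auto

lemma cut_edge: assumes i: "i \<in> {2..n}" and u: "u \<in> V_set n c i (A i + 1)"
  and w: "w \<in> {1..n}" "w \<notin> V_set n c i (A i + 1)" and uw: "u \<noteq> w"
  shows "c u w \<le> A i"
proof -
  let ?R = "\<lambda>u w. i \<le> u \<and> u \<le> n \<and> i \<le> w \<and> w \<le> n \<and> u \<noteq> w \<and> A i + 1 \<le> c u w"
  have Ru: "?R\<^sup>*\<^sup>* i u" using u unfolding V_set_def by simp
  have ur: "i \<le> u" "u \<le> n" using V_mem[OF u] i by auto
  show ?thesis
  proof (cases "i \<le> w")
    case True
    show ?thesis
    proof (rule ccontr)
      assume "\<not> c u w \<le> A i"
      then have "?R u w" using ur True w uw by auto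
      then have "?R\<^sup>*\<^sup>* i w" by (rule rtranclp.rtrancl_into_rtrancl[OF Ru])
      then show False using w(2) unfolding V_set_def by simp
    qed
  next
    case False
    obtain ys where ys: "ys \<noteq> []" "distinct ys" "hd ys = i" "last ys = u"
      "\<forall>(x,y)\<in>set (trail_edges ys). ?R x y" using rtranclp_path[OF Ru] by blast
    have ysr: "x \<in> {i..n}" if "x \<in> set ys" for x
    proof -
      from vert_edge[OF ys(1) that] show ?thesis
      proof
        assume "x = hd ys" then show ?thesis using ys(3) i by auto
      next
        assume "\<exists>v. (v,x) \<in> set (trail_edges ys)"
        then obtain v where "(v,x) \<in> set (trail_edges ys)" by blast
        then show ?thesis using ys(5) by auto
      qed
    qed
    let ?zs = "ys @ [w]"
    have wn: "w \<notin> set ys"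
    proof
      assume "w \<in> set ys" then have "i \<le> w" using ysr by auto
      with False show False by simp
    qed
    have d: "distinct ?zs" using ys(2) wn by simp
    have ss: "set ?zs \<subseteq> {1..n}"
    proof
      fix x assume "x \<in> set ?zs"
      then have "x \<in> set ys \<or> x = w" by auto
      then show "x \<in> {1..n}"
      proof
        assume "x \<in> set ys" then have "x \<in> {i..n}" by (rule ysr)
        then show ?thesis using i by auto
      qed (use w(1) in simp)
    qed
    have tr: "is_trail n ?zs" using d ss by (intro distinct_trail) simp_all
    have "?zs \<in> trails_from_to n i w" using tr ys(1,3) unfolding trails_from_to_def by simp
    moreover have "w \<in> {1..i-1}" using w(1) False by auto
    ultimately have le: "me ?zs \<le> A i" by (rule A_props(3)[OF i, rotated])
    have te: "trail_edges ?zs = trail_edges ys @ [(u,w)]" using te_snoc[OF ys(1)] ys(4) by simp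
    have all: "\<forall>(x,y)\<in>set (trail_edges ?zs). min (A i + 1) (c u w) \<le> c x y"
    proof
      fix e assume "e \<in> set (trail_edges ?zs)"
      then have "e \<in> set (trail_edges ys) \<or> e = (u,w)" unfolding te by auto
      then show "case e of (x,y) \<Rightarrow> min (A i + 1) (c u w) \<le> c x y"
      proof
        assume "e \<in> set (trail_edges ys)"
        then have "case e of (x,y) \<Rightarrow> ?R x y" using ys(5) by blast
        then show ?thesis by (cases e) (simp add: min_le_iff_disj)
      qed simp
    qed
    have "min (A i + 1) (c u w) \<le> me ?zs"
      by (rule me_ge[OF _ all]) (simp add: te)
    then show ?thesis using le by linarith
  qed
qed

lemma dvd_in_ideal: "g dvd x \<Longrightarrow> in_ideal_mod m g x"
proof -
  assume "g dvd x" then obtain r where "x = g * r" by blast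
  then show ?thesis unfolding in_ideal_mod_def by (intro exI[of _ r]) (simp add: mult.commute)
qed

lemma in_ideal_dvd: "k \<le> t \<Longrightarrow> in_ideal_mod (int p ^ t) (int p ^ k) x \<Longrightarrow> int p ^ k dvd x"
proof -
  assume k: "k \<le> t" and "in_ideal_mod (int p ^ t) (int p ^ k) x"
  then obtain r where "[x = r * int p ^ k] (mod int p ^ t)" unfolding in_ideal_mod_def by blast
  then have "int p ^ t dvd x - r * int p ^ k" by (simp add: cong_iff_dvd_diff)
  moreover have "int p ^ k dvd int p ^ t" using k by (rule le_imp_power_dvd)
  ultimately have "int p ^ k dvd x - r * int p ^ k" by (blast intro: dvd_trans)
  then show ?thesis by (metis dvd_add_right_iff dvd_triv_right diff_add_cancel)
qed

lemma F_eq: "i \<in> {2..n} \<Longrightarrow> F_vec p n c i v = (if v \<in> V_set n c i (A i + 1) then int p ^ A i else 0)"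
  unfolding F_vec_def a_exp_eq by simp

lemma F_spline: assumes i: "i \<in> {2..n}" shows "is_spline p t n c (F_vec p n c i)"
proof -
  let ?V = "V_set n c i (A i + 1)"
  have pA: "0 < int p ^ A i" "int p ^ A i < int p ^ t"
    using p_gt1 A_props(2)[OF i] by (auto intro: power_strict_increasing)
  have out: "v \<notin> ?V" if "v \<notin> {1..n}" for v
    using V_mem[of v i] i that by auto
  have zv: "zmod_vec (int p ^ t) n (F_vec p n c i)"
    unfolding zmod_vec_def F_eq[OF i] using pA out p_gt1 by auto
  have "in_ideal_mod (int p ^ t) (int p ^ c u w) (F_vec p n c i u - F_vec p n c i w)"
    if uw: "u \<in> {1..n}" "w \<in> {1..n}" "u \<noteq> w" for u w
  proof (intro dvd_in_ideal)
    show "int p ^ c u w dvd F_vec p n c i u - F_vec p n c i w"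
    proof (cases "u \<in> ?V")
      case uT: True
      show ?thesis
      proof (cases "w \<in> ?V")
        case False
        have "c u w \<le> A i" using cut_edge[OF i uT uw(2) False uw(3)] .
        then show ?thesis unfolding F_eq[OF i] using uT False by (simp add: le_imp_power_dvd)
      next
        case wT: True
        have "F_vec p n c i u - F_vec p n c i w = 0" unfolding F_eq[OF i] using uT wT by simp
        then show ?thesis by simp
      qed
    next
      case uF: False
      show ?thesis
      proof (cases "w \<in> ?V")
        case True
        have "c w u \<le> A i" using cut_edge[OF i True uw(1) uF] uw(3) by auto
        then have "c u w \<le> A i" using edge_props[OF uw] by simp
        then show ?thesis unfolding F_eq[OF i] using True uF by (simp add: le_imp_power_dvd)
      next
        case wF: False
        have "F_vec p n c i u - F_vec p n c i w = 0" unfolding F_eq[OF i] using uF wF by simp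
        then show ?thesis by simp
      qed
    qed
  qed
  then show ?thesis unfolding is_spline_def using zv by blast
qed

lemma F_flow: assumes i: "i \<in> {2..n}"
  shows "is_flow_up p t n c i (F_vec p n c i)" "F_vec p n c i i = int p ^ A i"
proof -
  have pA: "0 < int p ^ A i" "int p ^ A i < int p ^ t"
    using p_gt1 A_props(2)[OF i] by (auto intro: power_strict_increasing)
  show Fi: "F_vec p n c i i = int p ^ A i" unfolding F_eq[OF i] using V_refl by simp
  have "\<not> int p ^ t dvd int p ^ A i" using pA zdvd_imp_le by fastforce
  then have "\<not> [F_vec p n c i i = 0] (mod int p ^ t)" unfolding Fi cong_0_iff .
  moreover have "[F_vec p n c i s = 0] (mod int p ^ t)" if "1 \<le> s" "s < i" for s
    using V_mem[of s i] that unfolding F_eq[OF i] by auto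
  ultimately show "is_flow_up p t n c i (F_vec p n c i)" unfolding is_flow_up_def
    using F_spline[OF i] by blast
qed


definition dms :: "(nat \<Rightarrow> int) \<Rightarrow> bool" where
  "dms f \<longleftrightarrow> (\<forall>u\<in>{1..n}. \<forall>w\<in>{1..n}. u \<noteq> w \<longrightarrow> int p ^ c u w dvd f u - f w)"

lemma spline_dms: "is_spline p t n c f \<Longrightarrow> dms f"
  unfolding dms_def is_spline_def using in_ideal_dvd edge_props by (meson less_imp_le)

lemma dms_diff: "dms f \<Longrightarrow> dms g \<Longrightarrow> dms (\<lambda>v. f v - r * g v)"
proof -
  assume f: "dms f" and g: "dms g"
  show ?thesis unfolding dms_def
  proof (intro ballI impI)
    fix u w assume uw: "u \<in> {1..n}" "w \<in> {1..n}" "u \<noteq> w"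
    have d1: "int p ^ c u w dvd f u - f w" using f uw unfolding dms_def by blast
    have d2: "int p ^ c u w dvd g u - g w" using g uw unfolding dms_def by blast
    have "int p ^ c u w dvd (f u - f w) - r * (g u - g w)"
      using dvd_diff[OF d1 dvd_mult[OF d2, of r]] .
    then show "int p ^ c u w dvd (f u - r * g u) - (f w - r * g w)"
      by (simp add: algebra_simps)
  qed
qed

lemma walk_dvd: "xs \<noteq> [] \<Longrightarrow> dms f \<Longrightarrow>
  (\<forall>(x,y)\<in>set (trail_edges xs). x\<in>{1..n} \<and> y\<in>{1..n} \<and> x\<noteq>y \<and> a \<le> c x y) \<Longrightarrow>
  int p ^ a dvd f (hd xs) - f (last xs)"
proof (induction xs rule: induct_list012)
  case (3 x y zs)
  have e: "x\<in>{1..n}" "y\<in>{1..n}" "x\<noteq>y" "a \<le> c x y" using 3(5) by auto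
  have "int p ^ a dvd int p ^ c x y" using e(4) by (rule le_imp_power_dvd)
  moreover have "int p ^ c x y dvd f x - f y" using 3(4) e unfolding dms_def by blast
  ultimately have d1: "int p ^ a dvd f x - f y" by (rule dvd_trans)
  have d2: "int p ^ a dvd f y - f (last (y#zs))" using 3 by auto
  have "int p ^ a dvd (f x - f y) + (f y - f (last (y#zs)))" using d1 d2 by (rule dvd_add)
  then show ?case by simp
qed auto

lemma P3: assumes i: "i \<in> {2..n}" and f: "dms f" and z: "\<forall>s. 1 \<le> s \<and> s < i \<longrightarrow> int p ^ t dvd f s"
  shows "int p ^ A i dvd f i"
proof -
  obtain k xs where kx: "k\<in>{1..i-1}" "xs\<in>trails_from_to n i k" "me xs = A i" using A_props(4)[OF i] by blast
  have tr: "is_trail n xs" "hd xs = i" "last xs = k" "xs \<noteq> []" using kx(2) unfolding trails_from_to_def is_trail_def by auto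
  have "\<forall>(x,y)\<in>set (trail_edges xs). x\<in>{1..n} \<and> y\<in>{1..n} \<and> x\<noteq>y \<and> A i \<le> c x y"
  proof
    fix e assume e: "e \<in> set (trail_edges xs)"
    obtain x y where xy: "e = (x,y)" by (cases e)
    have "x\<in>{1..n} \<and> y\<in>{1..n} \<and> x\<noteq>y" using trail_edge_props[OF tr(1)] e xy by blast
    moreover have "me xs \<le> c x y" using me_le e xy by blast
    ultimately show "case e of (x,y) \<Rightarrow> x\<in>{1..n} \<and> y\<in>{1..n} \<and> x\<noteq>y \<and> A i \<le> c x y"
      using xy kx(3) by simp
  qed
  then have d1: "int p ^ A i dvd f i - f k" using walk_dvd[OF tr(4) f] tr by simp
  have "int p ^ t dvd f k" using z kx(1) i by auto
  moreover have "int p ^ A i dvd int p ^ t" using A_props(2)[OF i] by (intro le_imp_power_dvd) simp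
  ultimately have d2: "int p ^ A i dvd f k" by (blast intro: dvd_trans)
  have "int p ^ A i dvd (f i - f k) + f k" using d1 d2 by (rule dvd_add)
  then show ?thesis by simp
qed

definition gen :: "nat \<Rightarrow> nat \<Rightarrow> int" where
  "gen j v = (if j = 0 then (if v \<in> {1..n} then 1 else 0) else F_vec p n c (j+1) v)"

lemma gen_spline: "j < n \<Longrightarrow> is_spline p t n c (gen j)"
proof (cases "j = 0")
  case True
  have "zmod_vec (int p ^ t) n (gen j)" unfolding zmod_vec_def gen_def using True pt_gt1 by auto
  moreover have "in_ideal_mod (int p ^ t) (int p ^ c u w) (gen j u - gen j w)" if "u\<in>{1..n}" "w\<in>{1..n}" for u w
    using that True by (intro dvd_in_ideal) (simp add: gen_def)
  ultimately show ?thesis unfolding is_spline_def by blast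
next
  case False
  assume "j < n"
  then have "j + 1 \<in> {2..n}" using False by auto
  then show ?thesis unfolding gen_def using False F_spline by simp
qed

lemma gen_props: assumes m: "m \<in> {1..n}" and f: "dms f" and z: "\<forall>s. 1 \<le> s \<and> s < m \<longrightarrow> int p ^ t dvd f s"
  shows "dms (gen (m-1))" "\<And>s. s < m \<Longrightarrow> gen (m-1) s = 0" "\<exists>r. f m = r * gen (m-1) m"
proof -
  show "dms (gen (m-1))" using gen_spline[of "m-1"] m spline_dms by auto
  show "\<And>s. s < m \<Longrightarrow> gen (m-1) s = 0"
  proof -
    fix s assume s: "s < m"
    show "gen (m-1) s = 0"
    proof (cases "m = 1")
      case True then show ?thesis using s unfolding gen_def by simp
    next
      case False
      then have mi: "m \<in> {2..n}" "m - 1 + 1 = m" "m - 1 \<noteq> 0" using m by auto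
      have "s \<notin> V_set n c m (A m + 1)" using V_mem[of s m] s by auto
      then show ?thesis unfolding gen_def using mi F_eq[OF mi(1)] by simp
    qed
  qed
  show "\<exists>r. f m = r * gen (m-1) m"
  proof (cases "m = 1")
    case True then show ?thesis using m unfolding gen_def by simp
  next
    case False
    then have mi: "m \<in> {2..n}" "m - 1 + 1 = m" "m - 1 \<noteq> 0" using m by auto
    have "gen (m-1) m = int p ^ A m" unfolding gen_def using mi F_flow(2)[OF mi(1)] by simp
    moreover have "int p ^ A m dvd f m" using P3[OF mi(1) f z] .
    ultimately show ?thesis by (metis dvd_def mult.commute)
  qed
qed

lemma gen_Q: assumes i1: "1 \<le> i" and i2: "i \<le> n + 1" shows "\<forall>f. dms f \<longrightarrow> (\<forall>s. 1 \<le> s \<and> s < i \<longrightarrow> int p ^ t dvd f s) \<longrightarrow>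
   (\<exists>b. \<forall>v\<in>{1..n}. int p ^ t dvd f v - (\<Sum>j<n. b j * gen j v))"
  using i2
proof (induction rule: inc_induct)
  case base
  show ?case
  proof (intro allI impI)
    fix f :: "nat \<Rightarrow> int" assume "\<forall>s. 1 \<le> s \<and> s < n + 1 \<longrightarrow> int p ^ t dvd f s"
    then show "\<exists>b. \<forall>v\<in>{1..n}. int p ^ t dvd f v - (\<Sum>j<n. b j * gen j v)"
      by (intro exI[of _ "\<lambda>_. 0"]) auto
  qed
next
  case (step m)
  show ?case
  proof (intro allI impI)
    fix f :: "nat \<Rightarrow> int" assume f: "dms f" and z: "\<forall>s. 1 \<le> s \<and> s < m \<longrightarrow> int p ^ t dvd f s"
    have m: "m \<in> {1..n}" using step.hyps i1 by auto
    note gp = gen_props[OF m f z]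
    obtain r where r: "f m = r * gen (m-1) m" using gp(3) by blast
    define f' where "f' = (\<lambda>v. f v - r * gen (m-1) v)"
    have f'd: "dms f'" unfolding f'_def using f gp(1) by (rule dms_diff)
    have f'z: "\<forall>s. 1 \<le> s \<and> s < Suc m \<longrightarrow> int p ^ t dvd f' s"
    proof (intro allI impI)
      fix s assume s: "1 \<le> s \<and> s < Suc m"
      show "int p ^ t dvd f' s"
      proof (cases "s = m")
        case True then show ?thesis unfolding f'_def using r by simp
      next
        case False then have "s < m" using s by simp
        then show ?thesis unfolding f'_def using gp(2) z s by simp
      qed
    qed
    obtain b where b: "\<forall>v\<in>{1..n}. int p ^ t dvd f' v - (\<Sum>j<n. b j * gen j v)"
      using step.IH f'd f'z by blast
    have mn: "m - 1 < n" using m by auto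
    show "\<exists>b. \<forall>v\<in>{1..n}. int p ^ t dvd f v - (\<Sum>j<n. b j * gen j v)"
    proof (intro exI[of _ "b(m-1 := b (m-1) + r)"] ballI)
      fix v assume v: "v \<in> {1..n}"
      have "f v - (\<Sum>j<n. (b(m-1 := b (m-1) + r)) j * gen j v) = f' v - (\<Sum>j<n. b j * gen j v)"
        unfolding f'_def using sum_upd[OF mn, of b r "\<lambda>j. gen j v"] by simp
      then show "int p ^ t dvd f v - (\<Sum>j<n. (b(m-1 := b (m-1) + r)) j * gen j v)"
        using b v by simp
    qed
  qed
qed

lemma generates_n: "generates_splines p t n c n gen"
  unfolding generates_splines_def
proof (intro conjI ballI allI impI)
  fix j assume "j < n" then show "gen j \<in> splines p t n c" unfolding splines_def using gen_spline by simp
next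
  fix f assume "f \<in> splines p t n c"
  then have "dms f" unfolding splines_def using spline_dms by simp
  then obtain b where "\<forall>v\<in>{1..n}. int p ^ t dvd f v - (\<Sum>j<n. b j * gen j v)"
    using gen_Q[of 1] by auto
  then show "\<exists>a. \<forall>v\<in>{1..n}. [f v = (\<Sum>j<n. a j * gen j v)] (mod int p ^ t)"
    by (auto simp: cong_iff_dvd_diff)
qed


lemma lower: assumes gs: "generates_splines p t n c k g" shows "n \<le> k"
proof (rule ccontr)
  assume "\<not> n \<le> k" then have kn: "k < n" by simp
  let ?q = "int p ^ (t-1)"
  have qt: "int p ^ t = ?q * int p" using t1 by (cases t) (auto simp: power_Suc2)
  have q0: "?q \<noteq> 0" using p_gt1 by simp
  have qlt: "?q < int p ^ t" using p_gt1 t1 by (intro power_strict_increasing) auto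
  define h where "h r v = (if v = r then ?q else (0::int))" for r v :: nat
  have hs: "h r \<in> splines p t n c" if r: "r \<in> {1..n}" for r
  proof -
    have zv: "zmod_vec (int p ^ t) n (h r)" unfolding zmod_vec_def h_def using r qlt p_gt1 by auto
    have "in_ideal_mod (int p ^ t) (int p ^ c u w) (h r u - h r w)"
      if uw: "u\<in>{1..n}" "w\<in>{1..n}" "u \<noteq> w" for u w
    proof (intro dvd_in_ideal dvd_diff)
      have "c u w \<le> t - 1" using edge_props[OF uw] by linarith
      then have d: "int p ^ c u w dvd ?q" by (rule le_imp_power_dvd)
      show "int p ^ c u w dvd h r u" unfolding h_def using d by auto
      show "int p ^ c u w dvd h r w" unfolding h_def using d by auto
    qed
    then show ?thesis unfolding splines_def is_spline_def using zv by blast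
  qed
  have G: "\<forall>f\<in>splines p t n c. \<exists>a. \<forall>v\<in>{1..n}. [f v = (\<Sum>j<k. a j * g j v)] (mod int p ^ t)"
    using gs unfolding generates_splines_def by (rule conjunct2)
  have "\<forall>r\<in>{1..n}. \<exists>a. \<forall>v\<in>{1..n}. [h r v = (\<Sum>j<k. a j * g j v)] (mod int p ^ t)"
  proof
    fix r assume r: "r \<in> {1..n}"
    show "\<exists>a. \<forall>v\<in>{1..n}. [h r v = (\<Sum>j<k. a j * g j v)] (mod int p ^ t)"
      using bspec[OF G hs[OF r]] .
  qed
  from bchoice[OF this] obtain aa where aa: "\<forall>r\<in>{1..n}. \<forall>v\<in>{1..n}. [h r v = (\<Sum>j<k. aa r j * g j v)] (mod int p ^ t)"
    by blast
  define Am where "Am = mat n n (\<lambda>(r,j). if j < k then aa (r+1) j else 0)"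
  define Gm where "Gm = mat n n (\<lambda>(j,w). if j < k then g j (w+1) else 0)"
  have Acar: "Am \<in> carrier_mat n n" and Gcar: "Gm \<in> carrier_mat n n" unfolding Am_def Gm_def by simp_all
  have detG: "det Gm = 0"
  proof -
    have "signof \<sigma> * (\<Prod>i = 0..<n. Gm $$ (i, \<sigma> i)) = 0" if "\<sigma> permutes {0..<n}" for \<sigma>
    proof -
      have "\<sigma> (n-1) \<in> {0..<n}" using that kn permutes_in_image[OF that, of "n-1"] by auto
      then have "Gm $$ (n-1, \<sigma> (n-1)) = 0" unfolding Gm_def using kn by simp
      moreover have "n - 1 \<in> {0..<n}" using kn by auto
      ultimately have "(\<Prod>i = 0..<n. Gm $$ (i, \<sigma> i)) = 0" by (intro prod_zero) auto
      then show ?thesis by simp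
    qed
    then show ?thesis unfolding det_def'[OF Gcar] by (intro sum.neutral) auto
  qed
  define B where "B = Am * Gm"
  have Bcar: "B \<in> carrier_mat n n" unfolding B_def using Acar Gcar by simp
  have Bent: "B $$ (r,w) = (\<Sum>j<k. aa (r+1) j * g j (w+1))" if rw: "r < n" "w < n" for r w
  proof -
    have "B $$ (r,w) = (\<Sum>j\<in>{0..<n}. Am $$ (r,j) * Gm $$ (j,w))"
      unfolding B_def using rw Acar Gcar by (simp add: scalar_prod_def)
    also have "\<dots> = (\<Sum>j\<in>{..<k}. Am $$ (r,j) * Gm $$ (j,w))"
      by (rule sum.mono_neutral_right) (use kn rw in \<open>auto simp: Gm_def\<close>)
    also have "\<dots> = (\<Sum>j<k. aa (r+1) j * g j (w+1))"
      by (rule sum.cong) (use kn rw in \<open>auto simp: Am_def Gm_def\<close>)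
    finally show ?thesis .
  qed
  have Bcong: "int p ^ t dvd B $$ (r,w) - (if r = w then ?q else 0)" if rw: "r < n" "w < n" for r w
  proof -
    have "[h (r+1) (w+1) = (\<Sum>j<k. aa (r+1) j * g j (w+1))] (mod int p ^ t)"
      using aa rw by auto
    then have "int p ^ t dvd (\<Sum>j<k. aa (r+1) j * g j (w+1)) - h (r+1) (w+1)"
      by (metis cong_iff_dvd_diff cong_sym)
    then show ?thesis unfolding Bent[OF rw] h_def by (auto split: if_splits)
  qed
  have qdvd: "?q dvd B $$ (r,w)" if rw: "r < n" "w < n" for r w
  proof -
    have "?q dvd B $$ (r,w) - (if r = w then ?q else 0)"
      using Bcong[OF rw] unfolding qt by (meson dvd_mult_left)
    moreover have "?q dvd (if r = w then ?q else 0)" by simp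
    ultimately have "?q dvd (B $$ (r,w) - (if r = w then ?q else 0)) + (if r = w then ?q else 0)"
      by (rule dvd_add)
    then show ?thesis by simp
  qed
  define C where "C = mat n n (\<lambda>(r,w). B $$ (r,w) div ?q)"
  have Ccar: "C \<in> carrier_mat n n" unfolding C_def by simp
  have BC: "B = ?q \<cdot>\<^sub>m C"
  proof (rule eq_matI)
    fix r w assume "r < dim_row (?q \<cdot>\<^sub>m C)" "w < dim_col (?q \<cdot>\<^sub>m C)"
    then have rw: "r < n" "w < n" using Ccar by auto
    show "B $$ (r,w) = (?q \<cdot>\<^sub>m C) $$ (r,w)"
      using rw Ccar qdvd[OF rw] unfolding C_def by simp
  qed (use Bcar Ccar in auto)
  have Ccong: "int p dvd C $$ (r,w) - (if r = w then 1 else 0)" if rw: "r < n" "w < n" for r w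
  proof -
    have Beq: "B $$ (r,w) = ?q * C $$ (r,w)" using rw qdvd[OF rw] unfolding C_def by simp
    have "B $$ (r,w) - (if r = w then ?q else 0) = ?q * (C $$ (r,w) - (if r = w then 1 else 0))"
      unfolding Beq by (simp add: algebra_simps)
    then have "?q * int p dvd ?q * (C $$ (r,w) - (if r = w then 1 else 0))"
      using Bcong[OF rw] unfolding qt by simp
    then show ?thesis by (rule dvd_times_left_cancel_iff[OF q0, THEN iffD1])
  qed
  have detC: "int p dvd det C - 1"
  proof -
    let ?P = "{\<sigma>. \<sigma> permutes {0..<n}}"
    let ?T = "\<lambda>\<sigma>. signof \<sigma> * (\<Prod>i = 0..<n. C $$ (i, \<sigma> i))"
    have fin: "finite ?P" by (simp add: finite_permutations)
    have idP: "id \<in> ?P" by (simp add: permutes_id)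
    have dc: "det C = ?T id + (\<Sum>\<sigma>\<in>?P - {id}. ?T \<sigma>)"
      unfolding det_def'[OF Ccar] using sum.remove[OF fin idP, of ?T] by simp
    have "[(\<Prod>i = 0..<n. C $$ (i, i)) = (\<Prod>i = 0..<n. 1)] (mod int p)"
    proof (rule cong_prod)
      fix i assume "i \<in> {0..<n}"
      then have "int p dvd C $$ (i, i) - 1" using Ccong[of i i] by simp
      then show "[C $$ (i, i) = 1] (mod int p)" by (simp add: cong_iff_dvd_diff)
    qed
    then have d1: "int p dvd ?T id - 1" by (simp add: cong_iff_dvd_diff signof_id)
    have d2: "int p dvd (\<Sum>\<sigma>\<in>?P - {id}. ?T \<sigma>)"
    proof (rule dvd_sum)
      fix \<sigma> assume s: "\<sigma> \<in> ?P - {id}"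
      then have sp: "\<sigma> permutes {0..<n}" and sn: "\<sigma> \<noteq> id" by auto
      have "\<exists>i\<in>{0..<n}. \<sigma> i \<noteq> i"
      proof (rule ccontr)
        assume "\<not> (\<exists>i\<in>{0..<n}. \<sigma> i \<noteq> i)"
        then have eq: "\<sigma> x = id x" for x using permutes_not_in[OF sp, of x] by (cases "x \<in> {0..<n}") auto
        have "\<sigma> = id" using eq by (rule ext)
        then show False using sn by simp
      qed
      then obtain i where i: "i \<in> {0..<n}" "\<sigma> i \<noteq> i" by blast
      have si: "\<sigma> i < n" using permutes_in_image[OF sp, of i] i by auto
      have "int p dvd C $$ (i, \<sigma> i)" using Ccong[of i "\<sigma> i"] i si by auto
      also have "C $$ (i, \<sigma> i) dvd (\<Prod>i = 0..<n. C $$ (i, \<sigma> i))" using i by (intro dvd_prodI) auto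
      finally show "int p dvd ?T \<sigma>" by (rule dvd_mult)
    qed
    have e: "det C - 1 = (?T id - 1) + (\<Sum>\<sigma>\<in>?P - {id}. ?T \<sigma>)" unfolding dc by simp
    show ?thesis unfolding e by (rule dvd_add[OF d1 d2])
  qed
  have "det C \<noteq> 0"
  proof
    assume "det C = 0"
    then have "int p dvd 1" using detC by simp
    then have "int p \<le> 1" by (rule zdvd_imp_le) simp
    then show False using p_gt1 by simp
  qed
  then have "det B \<noteq> 0" unfolding BC using q0 Ccar p_gt1 by simp
  moreover have "det B = 0" unfolding B_def det_mult[OF Acar Gcar] detG by simp
  ultimately show False by simp
qed

lemma rank_eq: "spline_rank p t n c = n"
  unfolding spline_rank_def
proof (rule Least_equality)
  show "\<exists>g. generates_splines p t n c n g" using generates_n by blast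
next
  fix k assume "\<exists>g. generates_splines p t n c k g"
  then show "n \<le> k" using lower by blast
qed

end

theorem mainTheorem9:
  fixes p t n :: nat and c :: "nat \<Rightarrow> nat \<Rightarrow> nat"
  assumes "prime p" and "t \<ge> 1" and "valid_labeling n t c"
  shows "(\<forall>i\<in>{2..n}.
            int p ^ a_exp p n c i = lcm_trail_gcds p n c i \<and>
            is_flow_up p t n c i (F_vec p n c i) \<and>
            F_vec p n c i i = int p ^ a_exp p n c i)
         \<and> spline_rank p t n c = n"
proof -
  interpret kn p t n c using assms by unfold_locales
  have "int p ^ a_exp p n c i = lcm_trail_gcds p n c i \<and>
            is_flow_up p t n c i (F_vec p n c i) \<and>
            F_vec p n c i i = int p ^ a_exp p n c i" if i: "i \<in> {2..n}" for i
    using lcm_eq[OF i] a_exp_eq[OF i] F_flow[OF i] by simp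
  then show ?thesis using rank_eq by blast
qed

end
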